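(* Let $\mathbb B=\{q\in\mathbb H:|q|<1\}$ and let $f(q)=\sum_{n=0}^\infty q^na_n$ ($a_n\in\mathbb H$) be a slice regular function on $\mathbb B$. Suppose $A:=\sup_{q\in\mathbb B}\mathrm{Re}\,f(q)<+\infty$. Then $$|a_n|\le 2\big(A-\mathrm{Re}\,f(0)\big)\qquad\forall\, n\in\mathbb N=\{1,2,\dots\};$$ $$|f(q)-f(0)|\le\frac{2r}{1-r}\big(A-\mathrm{Re}\,f(0)\big)\qquad\forall\,|q|\le r<1;$$ $$\mathrm{Re}\,f(q)\le\frac{2r}{1+r}A+\frac{1-r}{1+r}\mathrm{Re}\,f(0)\qquad\forall\,|q|\le r<1;$$ $$|f^{(n)}(q)|\le\frac{2\,n!}{(1-r)^{n+1}}\big(A-\mathrm{Re}\,f(0)\big)\qquad\forall\,|q|\le r<1,\ n\in\mathbb N.$$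
   Context: $\mathbb H$ denotes the quaternions; $\mathrm{Re}\,q$ and $|q|$ are real part and modulus. $\mathbb S=\{q\in\mathbb H:q^2=-1\}$ and $\mathbb C_I=\mathbb R+I\mathbb R$ for $I\in\mathbb S$. A function $f$ on a domain $\Omega\subseteq\mathbb H$ is slice regular if for every $I\in\mathbb S$ its restriction $f_I$ to $\Omega\cap\mathbb C_I$ has continuous partial derivatives and satisfies $\frac12\big(\frac{\partial}{\partial x}+I\frac{\partial}{\partial y}\big)f_I(x+yI)=0$; on a ball centred at $0$ such functions are exactly convergent power series $\sum q^na_n$ with right coefficients. The slice derivative of $f$ at $x+yI$ is $\frac12\big(\frac{\partial}{\partial x}-I\frac{\partial}{\partial y}\big)f_I(x+yI)$ (which equals $\partial f/\partial x$), and $f^{(n)}$ denotes the $n$-th iterated slice derivative, so that $f^{(n)}(q)=\sum_{m\ge n}m(m-1)\cdots(m-n+1)q^{m-n}a_m$. *)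

theory Defs
  imports "HOL-Analysis.Analysis"
begin

text \<open>Quaternions q = x0 + x1 i + x2 j + x3 k are represented as 4-tuples of reals.
  The norm inherited from the product type is the Euclidean norm
  sqrt(x0^2+x1^2+x2^2+x3^2), i.e. the quaternion modulus; addition, subtraction,
  zero and real scalar multiplication are componentwise, as for quaternions.\<close>

type_synonym quat = "real \<times> real \<times> real \<times> real"

fun qmult :: "quat \<Rightarrow> quat \<Rightarrow> quat" where
  "qmult (a1, b1, c1, d1) (a2, b2, c2, d2) =
     (a1*a2 - b1*b2 - c1*c2 - d1*d2,
      a1*b2 + b1*a2 + c1*d2 - d1*c2,
      a1*c2 - b1*d2 + c1*a2 + d1*b2,
      a1*d2 + b1*c2 - c1*b2 + d1*a2)"

definition qone :: quat where "qone = (1, 0, 0, 0)"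

fun qpow :: "quat \<Rightarrow> nat \<Rightarrow> quat" where
  "qpow q 0 = qone"
| "qpow q (Suc n) = qmult (qpow q n) q"

definition qRe :: "quat \<Rightarrow> real" where "qRe q = fst q"

definition qball :: "quat set" where "qball = {q. norm q < 1}"

definition qseries :: "(nat \<Rightarrow> quat) \<Rightarrow> quat \<Rightarrow> quat" where
  "qseries a q = (\<Sum>n. qmult (qpow q n) (a n))"

text \<open>n-th slice derivative of the power series with coefficients a:
  f^(n)(q) = sum_{m>=n} m(m-1)...(m-n+1) q^(m-n) a_m.\<close>
definition slice_deriv :: "(nat \<Rightarrow> quat) \<Rightarrow> nat \<Rightarrow> quat \<Rightarrow> quat" where
  "slice_deriv a n q =
     (\<Sum>k. (fact (k + n) / fact k :: real) *\<^sub>R qmult (qpow q k) (a (k + n)))"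

end

theory Submission
  imports Defs "HOL-Complex_Analysis.Conformal_Mappings"
begin


lemma qnorm: "norm ((a,b,c,d)::quat) = sqrt (a^2+b^2+c^2+d^2)"
  by (simp add: norm_Pair add.assoc)

lemma qmult_norm: "norm (qmult x y) = norm x * norm y"
proof -
  obtain a b c d where x: "x = (a,b,c,d)" by (cases x) auto
  obtain e f g h where y: "y = (e,f,g,h)" by (cases y) auto
  have "(a*e - b*f - c*g - d*h)^2 + (a*f + b*e + c*h - d*g)^2 + (a*g - b*h + c*e + d*f)^2 + (a*h + b*g - c*f + d*e)^2
       = (a^2+b^2+c^2+d^2) * (e^2+f^2+g^2+h^2)" by algebra
  then show ?thesis by (simp add: x y qnorm real_sqrt_mult[symmetric])
qed

lemma qmult_zero_left[simp]: "qmult 0 y = 0"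
  by (cases y) (simp add: zero_prod_def)
lemma qmult_one_left[simp]: "qmult qone y = y"
  by (cases y) (simp add: qone_def)

lemma qpow_norm: "norm (qpow q n) = norm q ^ n"
  by (induction n) (auto simp: qmult_norm qone_def qnorm)

lemma qpow_zero: "qpow 0 (Suc n) = 0"
  by (cases "qpow 0 n") (simp add: zero_prod_def)



lemma rootsum:
  assumes N: "N > 0"
  shows "(\<Sum>k<N. cis (2*pi*real k * of_int d/real N)) = (if int N dvd d then of_nat N else 0)"
proof -
  define x where "x = cis (2*pi * of_int d/real N)"
  have eq: "cis (2*pi*real k * of_int d/real N) = x^k" for k
  proof -
    have "2*pi*real k * of_int d/real N = real k * (2*pi * of_int d/real N)" by simp
    then show ?thesis by (simp only: x_def Complex.DeMoivre)
  qed
  have xN: "x^N = 1"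
  proof -
    have "real N * (2*pi * of_int d/real N) = 2*pi* of_int d" using N by simp
    then show ?thesis unfolding x_def Complex.DeMoivre by simp
  qed
  show ?thesis
  proof (cases "int N dvd d")
    case True
    then obtain j where d: "d = int N * j" by blast
    have "2*pi * of_int d/real N = 2*pi* of_int j" using N unfolding d by simp
    then have "x = 1" unfolding x_def by simp
    then show ?thesis using True by (simp add: eq)
  next
    case False
    have "x \<noteq> 1"
    proof
      assume "x = 1"
      then have "cos (2*pi * of_int d/real N) = 1" unfolding x_def by (metis cis.sel(1) one_complex.sel(1))
      then obtain m::int where m: "2*pi * of_int d/real N = of_int m*2*pi" using cos_one_2pi_int by blast
      then have "of_int d = real N * of_int m" using N by (simp add: field_simps)
      then have "d = int N * m" by (metis of_int_eq_iff of_int_mult of_int_of_nat_eq)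
      with False show False by simp
    qed
    then show ?thesis using False by (simp add: eq sum_gp_strict xN)
  qed
qed



lemma avg:
  fixes c :: "nat \<Rightarrow> complex"
  assumes N: "N>0" and sm: "summable (\<lambda>m. norm (c m) * \<rho>^m)" and \<rho>: "0 \<le> \<rho>"
  shows "(\<Sum>k<N. (\<Sum>m. c m * (of_real \<rho> * cis (2*pi*real k/real N))^m) * cis (2*pi*real k * of_int (-p)/real N))
       = of_nat N * (\<Sum>m. if int N dvd (int m - p) then c m * of_real \<rho>^m else 0)"
proof -
  define g where "g m = (if int N dvd (int m - p) then c m * of_real \<rho>^m else 0)" for m
  have trm: "c m * (of_real \<rho> * cis (2*pi*real k/real N))^m * cis (2*pi*real k * of_int (-p)/real N)
      = c m * of_real \<rho>^m * cis (2*pi*real k * of_int (int m - p)/real N)" for m k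
  proof -
    have "(of_real \<rho> * cis (2*pi*real k/real N))^m = of_real \<rho>^m * cis (real m * (2*pi*real k/real N))"
      by (simp add: power_mult_distrib Complex.DeMoivre)
    moreover have "cis (real m * (2*pi*real k/real N)) * cis (2*pi*real k * of_int (-p)/real N)
        = cis (2*pi*real k * of_int (int m - p)/real N)"
      unfolding cis_mult by (rule arg_cong[where f=cis]) (simp add: diff_divide_distrib[symmetric] add_divide_distrib[symmetric] algebra_simps)
    ultimately show ?thesis by (simp add: mult_ac)
  qed
  have smk: "summable (\<lambda>m. c m * (of_real \<rho> * cis (2*pi*real k/real N))^m * cis (2*pi*real k * of_int (-p)/real N))" for k
  proof (rule summable_norm_cancel)
    show "summable (\<lambda>m. norm (c m * (of_real \<rho> * cis (2*pi*real k/real N))^m * cis (2*pi*real k * of_int (-p)/real N)))"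
      using sm by (simp add: norm_mult norm_power \<rho>)
  qed
  have "(\<Sum>k<N. (\<Sum>m. c m * (of_real \<rho> * cis (2*pi*real k/real N))^m) * cis (2*pi*real k * of_int (-p)/real N))
      = (\<Sum>k<N. (\<Sum>m. c m * (of_real \<rho> * cis (2*pi*real k/real N))^m * cis (2*pi*real k * of_int (-p)/real N)))"
  proof (rule sum.cong[OF refl])
    fix k
    have "summable (\<lambda>m. c m * (of_real \<rho> * cis (2*pi*real k/real N))^m)"
    proof (rule summable_norm_cancel)
      show "summable (\<lambda>m. norm (c m * (of_real \<rho> * cis (2*pi*real k/real N))^m))"
        using sm by (simp add: norm_mult norm_power \<rho>)
    qed
    then show "(\<Sum>m. c m * (of_real \<rho> * cis (2*pi*real k/real N))^m) * cis (2*pi*real k * of_int (-p)/real N)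
      = (\<Sum>m. c m * (of_real \<rho> * cis (2*pi*real k/real N))^m * cis (2*pi*real k * of_int (-p)/real N))"
      by (rule suminf_mult2)
  qed
  also have "\<dots> = (\<Sum>m. \<Sum>k<N. c m * (of_real \<rho> * cis (2*pi*real k/real N))^m * cis (2*pi*real k * of_int (-p)/real N))"
    by (rule suminf_sum[symmetric]) (rule smk)
  also have "\<dots> = (\<Sum>m. of_nat N * g m)"
  proof (rule suminf_cong)
    fix m
    have "(\<Sum>k<N. c m * (of_real \<rho> * cis (2*pi*real k/real N))^m * cis (2*pi*real k * of_int (-p)/real N))
        = c m * of_real \<rho>^m * (\<Sum>k<N. cis (2*pi*real k * of_int (int m - p)/real N))"
      unfolding trm by (simp add: sum_distrib_left)
    also have "\<dots> = of_nat N * g m" using N unfolding rootsum[OF N] g_def by simp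
    finally show "(\<Sum>k<N. c m * (of_real \<rho> * cis (2*pi*real k/real N))^m * cis (2*pi*real k * of_int (-p)/real N)) = of_nat N * g m" .
  qed
  also have "\<dots> = of_nat N * suminf g"
  proof (rule suminf_mult)
    show "summable g"
    proof (rule summable_norm_cancel, rule summable_comparison_test[OF _ sm])
      show "\<exists>N. \<forall>n\<ge>N. norm (norm (g n)) \<le> norm (c n) * \<rho> ^ n"
        by (auto simp: g_def norm_mult norm_power \<rho>)
    qed
  qed
  finally show ?thesis by (simp add: g_def[abs_def])
qed



lemma tailbd:
  fixes g :: "nat \<Rightarrow> complex"
  assumes sm: "summable (\<lambda>m. norm (c m) * \<rho>^m)" and \<rho>: "0 \<le> \<rho>"
  and g: "\<And>m. g m \<noteq> 0 \<Longrightarrow> M \<le> m \<and> norm (g m) \<le> norm (c m) * \<rho>^m"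
  shows "norm (suminf g) \<le> (\<Sum>i. norm (c (i+M)) * \<rho>^(i+M))"
proof -
  have gb: "norm (g m) \<le> norm (c m) * \<rho>^m" for m
    using g[of m] \<rho> by (cases "g m = 0") auto
  have sg: "summable (\<lambda>m. norm (g m))"
    by (rule summable_comparison_test[OF _ sm]) (auto intro: gb)
  have "norm (suminf g) \<le> (\<Sum>m. norm (g m))" by (rule summable_norm[OF sg])
  also have "\<dots> = (\<Sum>i. norm (g (i+M))) + (\<Sum>i<M. norm (g i))"
    by (rule suminf_split_initial_segment[OF sg])
  also have "(\<Sum>i<M. norm (g i)) = 0"
    using g by (intro sum.neutral) force
  also have "(\<Sum>i. norm (g (i+M))) \<le> (\<Sum>i. norm (c (i+M)) * \<rho>^(i+M))"
  proof (rule suminf_le)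
    show "summable (\<lambda>i. norm (g (i+M)))" using sg by (rule summable_ignore_initial_segment)
    show "summable (\<lambda>i. norm (c (i+M)) * \<rho>^(i+M))" using sm by (rule summable_ignore_initial_segment)
  qed (rule gb)
  finally show ?thesis by simp
qed



lemma dvd_big:
  assumes "int N dvd d" "d \<noteq> 0" shows "int N \<le> \<bar>d\<bar>"
  using dvd_imp_le_int[OF assms(2) assms(1)] by simp

lemma coef_eps:
  fixes c :: "nat \<Rightarrow> complex"
  assumes sm: "summable (\<lambda>m. norm (c m) * \<rho>^m)" and \<rho>0: "0 \<le> \<rho>" and \<rho>1: "\<rho> < 1"
  and le: "\<And>z. norm z < 1 \<Longrightarrow> Re (\<Sum>m. c m * z^m) \<le> A"
  and n: "n \<ge> 1" and e: "e > 0"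
  shows "norm (c n) * \<rho>^n \<le> 2*(A - Re (c 0)) + e"
proof -
  define T where "T M = (\<Sum>i. norm (c (i+M)) * \<rho>^(i+M))" for M
  obtain M0 where M0: "\<And>M. M \<ge> M0 \<Longrightarrow> norm (T M) < e/4"
    using suminf_exist_split[of "e/4" "\<lambda>m. norm (c m) * \<rho>^m", OF _ sm] e unfolding T_def by auto
  define N where "N = M0 + n + 1"
  have N0: "N > 0" and Nn: "n < N" and NM: "N - n \<ge> M0" by (auto simp: N_def)
  have TN: "T (N-n) < e/4" using M0[OF NM] by simp
  define F where "F k = (\<Sum>m. c m * (of_real \<rho> * cis (2*pi*real k/real N))^m)" for k
  define G where "G p = (\<Sum>m. if int N dvd (int m - p) then c m * of_real \<rho>^m else 0)" for p
  define E where "E k = cis (2*pi*real k * of_int (- int n)/real N)" for k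
  have X: "(\<Sum>k<N. F k * E k) = of_nat N * G (int n)"
    unfolding F_def E_def G_def by (rule avg[OF N0 sm \<rho>0])
  have Y: "(\<Sum>k<N. F k * cnj (E k)) = of_nat N * G (- int n)"
  proof -
    have "cnj (E k) = cis (2*pi*real k * of_int (- (- int n))/real N)" for k
      by (simp add: E_def cis_cnj)
    then show ?thesis unfolding F_def G_def using avg[OF N0 sm \<rho>0, of "- int n"] by simp
  qed
  have Z: "(\<Sum>k<N. F k) = of_nat N * G 0"
    unfolding F_def G_def using avg[OF N0 sm \<rho>0, of 0] by simp
  have Fle: "Re (F k) \<le> A" for k
    unfolding F_def using \<rho>0 \<rho>1 by (intro le) (simp add: norm_mult)
  have t1: "norm (G (int n) - c n * of_real \<rho>^n) \<le> T (N-n)"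
  proof -
    have s1: "summable (\<lambda>m. if int N dvd (int m - int n) then c m * of_real \<rho>^m else 0)"
      by (rule summable_norm_cancel, rule summable_comparison_test[OF _ sm]) (auto simp: norm_mult norm_power \<rho>0)
    have "G (int n) - c n * of_real \<rho>^n = (\<Sum>m. (if int N dvd (int m - int n) then c m * of_real \<rho>^m else 0)
        - (if m = n then c m * of_real \<rho>^m else 0))"
    proof -
      have "(\<Sum>m. (if int N dvd (int m - int n) then c m * of_real \<rho>^m else 0)
        - (if m = n then c m * of_real \<rho>^m else 0)) = (\<Sum>m. if int N dvd (int m - int n) then c m * of_real \<rho>^m else 0)
         - (\<Sum>m. if m = n then c m * of_real \<rho>^m else 0)"
        by (rule suminf_diff[OF s1 summable_single, symmetric])
      moreover have "c n * of_real \<rho>^n = (\<Sum>m. if m = n then c m * of_real \<rho>^m else 0)"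
        by (rule sums_unique[OF sums_single])
      ultimately show ?thesis unfolding G_def by simp
    qed
    also have "norm \<dots> \<le> T (N-n)" unfolding T_def
    proof (rule tailbd[OF sm \<rho>0])
      fix m assume "(if int N dvd (int m - int n) then c m * of_real \<rho>^m else 0)
        - (if m = n then c m * of_real \<rho>^m else 0) \<noteq> 0"
      then have d: "int N dvd (int m - int n)" "m \<noteq> n" by (auto split: if_splits)
      then have "int N \<le> \<bar>int m - int n\<bar>" by (intro dvd_big) auto
      with d Nn show "N - n \<le> m \<and> norm ((if int N dvd (int m - int n) then c m * of_real \<rho>^m else 0)
        - (if m = n then c m * of_real \<rho>^m else 0)) \<le> norm (c m) * \<rho>^m"
        by (auto simp: norm_mult norm_power \<rho>0)
    qed
    finally show ?thesis .
  qed
  have t2: "norm (G (- int n)) \<le> T (N-n)"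
    unfolding G_def T_def
  proof (rule tailbd[OF sm \<rho>0])
    fix m assume "(if int N dvd (int m - - int n) then c m * of_real \<rho>^m else 0) \<noteq> 0"
    then have d: "int N dvd (int m - - int n)" by (auto split: if_splits)
    then have "int N \<le> \<bar>int m - - int n\<bar>" using n by (intro dvd_big) auto
    with d Nn show "N - n \<le> m \<and> norm (if int N dvd (int m - - int n) then c m * of_real \<rho>^m else 0) \<le> norm (c m) * \<rho>^m"
      by (auto simp: norm_mult norm_power \<rho>0)
  qed
  have t3: "norm (G 0 - c 0) \<le> T (N-n)"
  proof -
    have s1: "summable (\<lambda>m. if int N dvd (int m - 0) then c m * of_real \<rho>^m else 0)"
      by (rule summable_norm_cancel, rule summable_comparison_test[OF _ sm]) (auto simp: norm_mult norm_power \<rho>0)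
    have "G 0 - c 0 = (\<Sum>m. (if int N dvd (int m - 0) then c m * of_real \<rho>^m else 0)
        - (if m = 0 then c m * of_real \<rho>^m else 0))"
    proof -
      have "(\<Sum>m. (if int N dvd (int m - 0) then c m * of_real \<rho>^m else 0)
        - (if m = 0 then c m * of_real \<rho>^m else 0)) = (\<Sum>m. if int N dvd (int m - 0) then c m * of_real \<rho>^m else 0)
         - (\<Sum>m. if m = 0 then c m * of_real \<rho>^m else 0)"
        by (rule suminf_diff[OF s1 summable_single, symmetric])
      moreover have "c 0 * of_real \<rho>^0 = (\<Sum>m. if m = 0 then c m * of_real \<rho>^m else 0)"
        by (rule sums_unique[OF sums_single])
      ultimately show ?thesis unfolding G_def by simp
    qed
    also have "norm \<dots> \<le> T (N-n)" unfolding T_def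
    proof (rule tailbd[OF sm \<rho>0])
      fix m assume "(if int N dvd (int m - 0) then c m * of_real \<rho>^m else 0)
        - (if m = 0 then c m * of_real \<rho>^m else 0) \<noteq> 0"
      then have d: "int N dvd (int m - 0)" "m \<noteq> 0" by (auto split: if_splits)
      then have "int N \<le> \<bar>int m - 0\<bar>" by (intro dvd_big) auto
      with d Nn show "N - n \<le> m \<and> norm ((if int N dvd (int m - 0) then c m * of_real \<rho>^m else 0)
        - (if m = 0 then c m * of_real \<rho>^m else 0)) \<le> norm (c m) * \<rho>^m"
        by (auto simp: norm_mult norm_power \<rho>0)
    qed
    finally show ?thesis .
  qed
  have sumE: "(\<Sum>k<N. E k) = 0"
    unfolding E_def rootsum[OF N0] using Nn n by (auto dest: zdvd_imp_le)
  have normE: "norm (E k) = 1" for k by (simp add: E_def)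
  have key: "of_nat N * (G (int n) + cnj (G (- int n))) = - (\<Sum>k<N. of_real (2 * (A - Re (F k))) * E k)"
  proof -
    have "of_nat N * (G (int n) + cnj (G (- int n))) = (\<Sum>k<N. F k * E k) + cnj (\<Sum>k<N. F k * cnj (E k))"
      by (simp add: X Y distrib_left)
    also have "\<dots> = (\<Sum>k<N. (F k + cnj (F k)) * E k)"
      by (simp add: cnj_sum sum.distrib distrib_right)
    also have "\<dots> = (\<Sum>k<N. of_real (2*A) * E k) - (\<Sum>k<N. of_real (2 * (A - Re (F k))) * E k)"
      by (simp add: complex_add_cnj sum_subtractf[symmetric] left_diff_distrib[symmetric])
    also have "(\<Sum>k<N. of_real (2*A) * E k) = 0" by (simp add: sum_distrib_left[symmetric] sumE)
    finally show ?thesis by simp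
  qed
  have "real N * norm (G (int n) + cnj (G (- int n))) \<le> (\<Sum>k<N. 2 * (A - Re (F k)))"
  proof -
    have "real N * norm (G (int n) + cnj (G (- int n))) = norm (\<Sum>k<N. of_real (2 * (A - Re (F k))) * E k)"
      using arg_cong[OF key, of norm] by (simp add: norm_mult)
    also have "\<dots> \<le> (\<Sum>k<N. norm (of_real (2 * (A - Re (F k))) * E k))" by (rule norm_sum)
    also have "\<dots> = (\<Sum>k<N. 2 * (A - Re (F k)))"
      using Fle by (intro sum.cong refl) (simp only: norm_mult normE norm_of_real mult_1_right, simp)
    finally show ?thesis .
  qed
  also have "(\<Sum>k<N. 2 * (A - Re (F k))) = real N * (2*A - 2 * Re (G 0))"
  proof -
    have "(\<Sum>k<N. 2 * (A - Re (F k))) = real N * 2 * A - 2 * Re (\<Sum>k<N. F k)"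
      by (simp add: sum_subtractf sum_distrib_left[symmetric] Re_sum)
    then show ?thesis by (simp add: Z algebra_simps)
  qed
  finally have mainb: "norm (G (int n) + cnj (G (- int n))) \<le> 2*A - 2 * Re (G 0)" using N0 by simp
  have "Re (c 0) - Re (G 0) \<le> norm (G 0 - c 0)"
  proof -
    have "Re (c 0 - G 0) \<le> norm (c 0 - G 0)" by (rule complex_Re_le_cmod)
    then show ?thesis by (simp add: norm_minus_commute)
  qed
  then have reg: "Re (c 0) - Re (G 0) \<le> T (N-n)" using t3 by linarith
  have "norm (c n) * \<rho>^n = norm (c n * of_real \<rho>^n)" by (simp add: norm_mult norm_power \<rho>0)
  also have "\<dots> \<le> norm (G (int n) + cnj (G (- int n))) + norm (G (- int n)) + norm (G (int n) - c n * of_real \<rho>^n)"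
  proof -
    have "c n * of_real \<rho>^n = (G (int n) + cnj (G (- int n))) - cnj (G (- int n)) - (G (int n) - c n * of_real \<rho>^n)"
      by simp
    moreover have "norm ((G (int n) + cnj (G (- int n))) - cnj (G (- int n)) - (G (int n) - c n * of_real \<rho>^n))
      \<le> norm ((G (int n) + cnj (G (- int n))) - cnj (G (- int n))) + norm (G (int n) - c n * of_real \<rho>^n)"
      by (rule norm_triangle_ineq4)
    moreover have "norm ((G (int n) + cnj (G (- int n))) - cnj (G (- int n)))
       \<le> norm (G (int n) + cnj (G (- int n))) + norm (cnj (G (- int n)))"
      by (rule norm_triangle_ineq4)
    ultimately show ?thesis by (simp only: complex_mod_cnj)
  qed
  also have "\<dots> \<le> 2*A - 2 * Re (G 0) + T (N-n) + T (N-n)" using mainb t1 t2 by linarith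
  also have "\<dots> \<le> 2*(A - Re (c 0)) + 4 * T (N-n)" using reg by (simp add: algebra_simps)
  also have "\<dots> \<le> 2*(A - Re (c 0)) + e" using TN by linarith
  finally show ?thesis .
qed



lemma coef_bound:
  fixes c :: "nat \<Rightarrow> complex"
  assumes sm: "\<And>r. 0 \<le> r \<Longrightarrow> r < 1 \<Longrightarrow> summable (\<lambda>m. norm (c m) * r^m)"
  and le: "\<And>z. norm z < 1 \<Longrightarrow> Re (\<Sum>m. c m * z^m) \<le> A"
  and n: "n \<ge> 1"
  shows "norm (c n) \<le> 2*(A - Re (c 0))"
proof -
  have h: "norm (c n) * \<rho>^n \<le> 2*(A - Re (c 0))" if "0 \<le> \<rho>" "\<rho> < 1" for \<rho>
    by (rule field_le_epsilon) (rule coef_eps[OF sm[OF that] that le n])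
  define \<rho> where "\<rho> j = 1 - inverse (real (Suc j)) / 2" for j
  have r01: "0 \<le> \<rho> j" "\<rho> j < 1" for j
  proof -
    have "inverse (real (Suc j)) \<le> 1" "inverse (real (Suc j)) > 0" by (auto simp: field_simps)
    then show "0 \<le> \<rho> j" "\<rho> j < 1" unfolding \<rho>_def by linarith+
  qed
  have "(\<lambda>j. norm (c n) * \<rho> j ^ n) \<longlonglongrightarrow> norm (c n) * (1 - 0/2)^n"
    unfolding \<rho>_def by (intro tendsto_intros LIMSEQ_inverse_real_of_nat) auto
  then have lim: "(\<lambda>j. norm (c n) * \<rho> j ^ n) \<longlonglongrightarrow> norm (c n)" by simp
  show ?thesis
    by (rule LIMSEQ_le_const2[OF lim], rule exI[of _ 0], intro allI impI h r01)
qed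

lemma nlt:
  fixes x :: complex
  assumes "Re x \<le> B" "B < B'" "0 < B'"
  shows "norm x < norm (of_real (2*B') - x)"
proof -
  have "(norm x)^2 = (Re x)^2 + (Im x)^2" by (rule cmod_power2)
  moreover have "(norm (of_real (2*B') - x))^2 = (2*B' - Re x)^2 + (Im x)^2" by (simp add: cmod_power2)
  moreover have "(Re x)^2 < (2*B' - Re x)^2"
  proof -
    have "(2*B' - Re x)^2 - (Re x)^2 = 4*B'*(B' - Re x)" by (simp add: power2_eq_square algebra_simps)
    moreover have "4*B'*(B' - Re x) > 0" using assms by (intro mult_pos_pos) auto
    ultimately show ?thesis by linarith
  qed
  ultimately have "(norm x)^2 < (norm (of_real (2*B') - x))^2" by linarith
  then show ?thesis by (rule power_less_imp_less_base) simp
qed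

lemma reb:
  fixes h :: complex
  assumes "norm h \<le> r" "r < 1"
  shows "Re (h / (1 + h)) \<le> r / (1 + r)"
proof -
  obtain x y where hxy: "h = Complex x y" by (cases h) auto
  define t where "t = norm h"
  have t2: "t*t = x^2 + y^2" unfolding t_def hxy by (simp add: cmod_def power2_eq_square)
  have xt: "x \<le> t" unfolding t_def hxy cmod_def by (simp add: real_sqrt_ge_abs1 [THEN order_trans[OF abs_ge_self]])
  have mxt: "-x \<le> t" unfolding t_def hxy cmod_def
    by (metis abs_ge_minus_self complex.sel(1) order.trans cmod_def hxy abs_Re_le_cmod)
  have t0: "0 \<le> t" "t \<le> r" using assms by (auto simp: t_def)
  have "1 + x > 0" using mxt t0 assms by linarith
  then have D: "(1+x)^2 + y^2 > 0" by (intro add_pos_nonneg) auto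
  have r0: "0 \<le> r" using t0 by linarith
  have e: "Re (h / (1 + h)) = (x*(1+x) + y*y) / ((1+x)^2 + y^2)"
    by (simp add: hxy Re_divide power2_eq_square)
  have a1: "x*(1-r) \<le> t*(1-r)" using xt assms by (intro mult_right_mono) auto
  have a2: "t*t \<le> t*r" using t0 by (intro mult_left_mono) auto
  have "(x*(1+x) + y*y) * (1 + r) \<le> r * ((1+x)^2 + y^2)"
  proof -
    have "(x*(1+x) + y*y) * (1 + r) - r * ((1+x)^2 + y^2) = x*(1-r) + (x^2+y^2) - r"
      by (simp add: power2_eq_square algebra_simps)
    also have "\<dots> \<le> 0" using a1 a2 t2 t0 by (simp add: algebra_simps)
    finally show ?thesis by simp
  qed
  then have f1: "(x*(1+x) + y*y) * (1 + r) / (((1+x)^2 + y^2) * (1+r)) \<le> r * ((1+x)^2 + y^2) / (((1+x)^2 + y^2) * (1+r))"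
    using D r0 by (intro divide_right_mono) auto
  have f2: "(x*(1+x) + y*y) * (1 + r) / (((1+x)^2 + y^2) * (1+r)) = (x*(1+x) + y*y) / ((1+x)^2 + y^2)"
    using r0 by simp
  have cancel: "r * DD / (DD * (1+r)) = r / (1+r)" if "DD \<noteq> 0" for DD :: real
    using that by simp
  have f3: "r * ((1+x)^2 + y^2) / (((1+x)^2 + y^2) * (1+r)) = r / (1+r)"
    by (intro cancel) (use D in linarith)
  show ?thesis using f1 unfolding e f2 f3 .
qed



lemma harnack:
  fixes c :: "nat \<Rightarrow> complex"
  assumes sm: "\<And>r. 0 \<le> r \<Longrightarrow> r < 1 \<Longrightarrow> summable (\<lambda>m. norm (c m) * r^m)"
  and le: "\<And>z. norm z < 1 \<Longrightarrow> Re (\<Sum>m. c m * z^m) \<le> A"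
  and z: "norm z \<le> r" "r < 1"
  shows "Re (\<Sum>m. c m * z^m) \<le> 2*r/(1+r)*A + (1-r)/(1+r)*Re (c 0)"
proof -
  define S where "S \<zeta> = (\<Sum>m. c m * \<zeta>^m)" for \<zeta>
  have summ: "summable (\<lambda>m. c m * \<zeta>^m)" if "norm \<zeta> < 1" for \<zeta>
    by (rule summable_norm_cancel) (use sm[of "norm \<zeta>"] that in \<open>simp add: norm_mult norm_power\<close>)
  have hol: "S holomorphic_on ball 0 1"
  proof -
    have "(S has_field_derivative (\<Sum>m. diffs c m * \<zeta>^m)) (at \<zeta>)" if "\<zeta> \<in> ball 0 1" for \<zeta>
      unfolding S_def by (rule termdiffs_strong'[of 1]) (use summ that in auto)
    then show ?thesis by (auto simp: holomorphic_on_open intro!: exI)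
  qed
  have S0: "S 0 = c 0" by (simp add: S_def)
  define B where "B = A - Re (c 0)"
  have B0: "0 \<le> B" using le[of 0] by (simp add: B_def)
  have r0: "0 \<le> r" using z norm_ge_zero order_trans by blast
  have zlt: "norm z < 1" using z by linarith
  have main: "Re (S z) - Re (c 0) \<le> 2*(B+\<epsilon>)*r/(1+r)" if "\<epsilon> > 0" for \<epsilon>
  proof -
    define B' where "B' = B + \<epsilon>"
    have B'0: "B' > 0" "B < B'" using B0 that by (auto simp: B'_def)
    define w where "w \<zeta> = S \<zeta> - c 0" for \<zeta>
    have wle: "Re (w \<zeta>) \<le> B" if "norm \<zeta> < 1" for \<zeta> using le[OF that] by (simp add: w_def B_def S_def)
    define h where "h \<zeta> = w \<zeta> / (of_real (2*B') - w \<zeta>)" for \<zeta>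
    have den: "of_real (2*B') - w \<zeta> \<noteq> 0" if "norm \<zeta> < 1" for \<zeta>
    proof
      assume "of_real (2*B') - w \<zeta> = 0"
      then have "Re (of_real (2*B') - w \<zeta>) = 0" by simp
      then show False using wle[OF that] B'0 by simp
    qed
    have holh: "h holomorphic_on ball 0 1"
      unfolding h_def w_def by (intro holomorphic_intros hol) (use den in \<open>auto simp: w_def\<close>)
    have h0: "h 0 = 0" by (simp add: h_def w_def S0)
    have hlt: "norm (h \<zeta>) < 1" if "norm \<zeta> < 1" for \<zeta>
    proof -
      have "norm (w \<zeta>) < norm (of_real (2*B') - w \<zeta>)" by (rule nlt[OF wle[OF that] B'0(2) B'0(1)])
      then show ?thesis unfolding h_def norm_divide using den[OF that] by simp
    qed
    have hz: "norm (h z) \<le> norm z" by (rule Schwarz_Lemma(1)[OF holh h0 hlt zlt])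
    then have hzr: "norm (h z) \<le> r" using z by linarith
    have weq: "w z = of_real (2*B') * (h z / (1 + h z))"
    proof -
      have d: "of_real (2*B') - w z \<noteq> 0" by (rule den[OF zlt])
      have "1 + h z = of_real (2*B') / (of_real (2*B') - w z)"
        unfolding h_def using d by (simp add: field_simps)
      then have "h z / (1 + h z) = w z / of_real (2*B')"
        unfolding h_def using d B'0 by (simp add: field_simps)
      then show ?thesis using B'0 by simp
    qed
    have reml: "Re (complex_of_real a * u) = a * Re u" for a u by simp
    have "Re (w z) = 2*B' * Re (h z / (1 + h z))" unfolding weq by (rule reml)
    also have "\<dots> \<le> 2*B' * (r/(1+r))" using reb[OF hzr z(2)] B'0 by (intro mult_left_mono) auto
    finally show ?thesis by (simp add: w_def B'_def)
  qed
  have fin: "Re (S z) - Re (c 0) \<le> 2*B*r/(1+r)"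
  proof (rule field_le_epsilon)
    fix \<epsilon> :: real assume e: "\<epsilon> > 0"
    have "2*r/(1+r) \<le> 1" using r0 z by (simp add: divide_le_eq)
    then have "\<epsilon> * (2*r/(1+r)) \<le> \<epsilon> * 1" using e by (intro mult_left_mono) auto
    then have "\<epsilon> * (2*r/(1+r)) \<le> \<epsilon>" by simp
    moreover have "2*(B+\<epsilon>)*r/(1+r) = 2*B*r/(1+r) + \<epsilon> * (2*r/(1+r))" by (simp add: add_divide_distrib[symmetric] algebra_simps)
    ultimately show "Re (S z) - Re (c 0) \<le> 2*B*r/(1+r) + \<epsilon>" using main[OF e] by linarith
  qed
  have "2*r/(1+r)*A + (1-r)/(1+r)*Re (c 0) = Re (c 0) + 2*B*r/(1+r)"
  proof -
    have rr: "1 + r \<noteq> 0" using r0 by linarith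
    have e1: "(1+r) * (2*r/(1+r)*A + (1-r)/(1+r)*Re (c 0)) = 2*r*A + (1-r)*Re (c 0)"
      using rr by (simp add: distrib_left)
    have e2: "(1+r) * (Re (c 0) + 2*B*r/(1+r)) = (1+r)*Re (c 0) + 2*B*r"
      using rr by (simp add: distrib_left)
    have "(1+r) * (2*r/(1+r)*A + (1-r)/(1+r)*Re (c 0)) = (1+r) * (Re (c 0) + 2*B*r/(1+r))"
      unfolding e1 e2 by (simp add: B_def algebra_simps)
    then show ?thesis using rr by simp
  qed
  then show ?thesis using fin unfolding S_def by linarith
qed



definition qphi :: "real \<Rightarrow> real \<Rightarrow> real \<Rightarrow> complex \<Rightarrow> quat" where
  "qphi i j k z = (Re z, Im z * i, Im z * j, Im z * k)"
definition ccoef :: "real \<Rightarrow> real \<Rightarrow> real \<Rightarrow> quat \<Rightarrow> complex" where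
  "ccoef i j k a = Complex (fst a) (i * fst (snd a) + j * fst (snd (snd a)) + k * snd (snd (snd a)))"

lemma qphi_mult:
  assumes u: "i^2 + j^2 + k^2 = 1"
  shows "qmult (qphi i j k z) (qphi i j k w) = qphi i j k (z * w)"
proof -
  have e1: "Re z * Re w - Im z * i * (Im w * i) - Im z * j * (Im w * j) - Im z * k * (Im w * k) = Re (z*w)"
  proof -
    have "Re z * Re w - Im z * i * (Im w * i) - Im z * j * (Im w * j) - Im z * k * (Im w * k)
      = Re z * Re w - Im z * Im w * (i^2 + j^2 + k^2)" by (simp add: power2_eq_square algebra_simps)
    then show ?thesis using u by simp
  qed
  have e2: "Re z * (Im w * i) + Im z * i * Re w + Im z * j * (Im w * k) - Im z * k * (Im w * j) = Im (z*w) * i"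
    by (simp add: algebra_simps)
  have e3: "Re z * (Im w * j) - Im z * i * (Im w * k) + Im z * j * Re w + Im z * k * (Im w * i) = Im (z*w) * j"
    by (simp add: algebra_simps)
  have e4: "Re z * (Im w * k) + Im z * i * (Im w * j) - Im z * j * (Im w * i) + Im z * k * Re w = Im (z*w) * k"
    by (simp add: algebra_simps)
  show ?thesis unfolding qphi_def qmult.simps e1 e2 e3 e4 ..
qed

lemma qphi_one: "qphi i j k 1 = qone" by (simp add: qphi_def qone_def)

lemma qphi_pow:
  assumes u: "i^2 + j^2 + k^2 = 1"
  shows "qpow (qphi i j k z) n = qphi i j k (z ^ n)"
  by (induction n) (simp_all add: qphi_one qphi_mult[OF u] mult.commute)

lemma qRe_qphi: "qRe (qmult (qphi i j k z) a) = Re (ccoef i j k a * z)"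
  by (cases a) (simp add: qphi_def ccoef_def qRe_def algebra_simps)

lemma qphi_norm:
  assumes u: "i^2 + j^2 + k^2 = 1"
  shows "norm (qphi i j k z) = norm z"
proof -
  have "(Re z)^2 + (Im z * i)^2 + (Im z * j)^2 + (Im z * k)^2 = (Re z)^2 + (Im z)^2 * (i^2 + j^2 + k^2)"
    by (simp add: power_mult_distrib algebra_simps)
  then show ?thesis using u by (simp add: qphi_def qnorm cmod_def)
qed

lemma ccoef_norm:
  assumes u: "i^2 + j^2 + k^2 = 1"
  shows "norm (ccoef i j k a) \<le> norm a"
proof -
  obtain a0 a1 a2 a3 where a: "a = (a0, a1, a2, a3)" by (cases a) auto
  have "(i^2 + j^2 + k^2) * (a1^2 + a2^2 + a3^2) - (i*a1 + j*a2 + k*a3)^2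
      = (i*a2 - j*a1)^2 + (i*a3 - k*a1)^2 + (j*a3 - k*a2)^2" by algebra
  moreover have "0 \<le> (i*a2 - j*a1)^2 + (i*a3 - k*a1)^2 + (j*a3 - k*a2)^2" by simp
  ultimately have "0 \<le> (i^2 + j^2 + k^2) * (a1^2 + a2^2 + a3^2) - (i*a1 + j*a2 + k*a3)^2" by simp
  then have "(i*a1 + j*a2 + k*a3)^2 \<le> a1^2 + a2^2 + a3^2" using u by simp
  then show ?thesis by (simp add: a ccoef_def qnorm cmod_def)
qed

lemma choose_slice:
  "\<exists>i j k. i^2 + j^2 + k^2 = 1 \<and> norm (ccoef i j k a) = norm a
     \<and> qphi i j k (Complex (fst a) (sqrt ((fst (snd a))^2 + (fst (snd (snd a)))^2 + (snd (snd (snd a)))^2))) = a"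
proof -
  obtain a0 a1 a2 a3 where a: "a = (a0, a1, a2, a3)" by (cases a) auto
  define v where "v = sqrt (a1^2 + a2^2 + a3^2)"
  have v2: "v^2 = a1^2 + a2^2 + a3^2" unfolding v_def by simp
  show ?thesis
  proof (cases "v = 0")
    case True
    then have "a1^2 + a2^2 + a3^2 = 0" using v2 by simp
    moreover have "0 \<le> a1^2" "0 \<le> a2^2" "0 \<le> a3^2" by simp_all
    ultimately have "a1^2 = 0" "a2^2 = 0" "a3^2 = 0" by linarith+
    then have z: "a1 = 0" "a2 = 0" "a3 = 0" by simp_all
    show ?thesis
      by (rule exI[of _ 1], rule exI[of _ 0], rule exI[of _ 0])
         (simp add: a z ccoef_def qphi_def qnorm cmod_def)
  next
    case False
    have "v \<ge> 0" unfolding v_def by simp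
    then have vp: "v > 0" using False by linarith
    have "(a1/v)^2 + (a2/v)^2 + (a3/v)^2 = (a1^2+a2^2+a3^2)/v^2" by (simp add: power_divide add_divide_distrib)
    also have "\<dots> = 1" unfolding v2[symmetric] using vp by simp
    finally have u: "(a1/v)^2 + (a2/v)^2 + (a3/v)^2 = 1" .
    have c: "ccoef (a1/v) (a2/v) (a3/v) a = Complex a0 v"
    proof -
      have "a1/v * a1 + a2/v * a2 + a3/v * a3 = v^2 / v" using v2 by (simp add: power2_eq_square add_divide_distrib)
      then show ?thesis using vp by (simp add: a ccoef_def power2_eq_square)
    qed
    show ?thesis
      by (rule exI[of _ "a1/v"], rule exI[of _ "a2/v"], rule exI[of _ "a3/v"])
         (use u c vp v2 in \<open>simp add: a qphi_def qnorm cmod_def v_def[symmetric]\<close>)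
  qed
qed



lemma binom_series:
  fixes r :: real assumes r: "0 \<le> r" "r < 1"
  shows "(\<lambda>k. fact (k+n) / fact k * r^k) sums (fact n / (1-r)^(n+1))"
proof -
  have s: "(\<lambda>k. ((-(real n + 1)) gchoose k) * (-r)^k) sums (1 + (-r)) powr (-(real n + 1))"
    by (rule gen_binomial_real) (use r in auto)
  have eq: "((-(real n + 1)) gchoose k) * (-r)^k = real ((n+k) choose k) * r^k" for k
  proof -
    have g1: "((-(real n + 1)) gchoose k) = (-1)^k * ((real n + 1 + of_nat k - 1) gchoose k)"
      by (rule gbinomial_minus)
    have g2: "real n + 1 + of_nat k - 1 = real (n+k)" by simp
    have g3: "(real (n+k) gchoose k) = real ((n+k) choose k)" by (rule binomial_gbinomial[symmetric])
    have g: "((-(real n + 1)) gchoose k) = (-1)^k * real ((n+k) choose k)" using g1 unfolding g2 g3 .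
    have m: "(-r)^k = (-1)^k * r^k" by (rule power_minus)
    have o: "((-1::real)^k) * ((-1)^k) = 1"
      by (metis power_mult_distrib mult_minus_left mult_1_left minus_minus power_one)
    have "((-1)^k * real ((n+k) choose k)) * ((-1)^k * r^k) = (((-1::real)^k) * ((-1)^k)) * (real ((n+k) choose k) * r^k)"
      by (simp only: mult_ac)
    then show ?thesis unfolding g m o by simp
  qed
  have pw: "(1 + (-r)) powr (-(real n + 1)) = 1 / (1-r)^(n+1)"
  proof -
    have "(1 - r) powr (-(real n + 1)) = inverse ((1-r) powr (real n + 1))" by (rule powr_minus)
    also have "(1-r) powr (real n + 1) = (1-r) powr (real (n+1))" by (simp add: add.commute)
    also have "\<dots> = (1-r)^(n+1)" using r by (intro powr_realpow) auto
    finally show ?thesis by (simp add: divide_inverse)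
  qed
  have fk: "fact (k+n) / fact k = fact n * real ((n+k) choose k)" for k :: nat
  proof -
    have "real ((n+k) choose k) = fact (n+k) / (fact k * fact (n + k - k))" by (rule binomial_fact) simp
    then show ?thesis by (simp add: add.commute)
  qed
  have "(\<lambda>k. real ((n+k) choose k) * r^k) sums (1 / (1-r)^(n+1))"
    using s unfolding eq pw by simp
  then have "(\<lambda>k. fact n * (real ((n+k) choose k) * r^k)) sums (fact n * (1 / (1-r)^(n+1)))"
    by (rule sums_mult)
  then show ?thesis unfolding fk by (simp add: mult_ac)
qed



theorem theorem1p4:
  fixes a :: "nat \<Rightarrow> quat" and f :: "quat \<Rightarrow> quat" and A :: real
  assumes conv: "\<forall>q \<in> qball. summable (\<lambda>n. qmult (qpow q n) (a n))"
    and f_eq: "\<forall>q \<in> qball. f q = qseries a q"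
    and bdd: "bdd_above ((\<lambda>q. qRe (f q)) ` qball)"
    and A_def: "A = (SUP q \<in> qball. qRe (f q))"
  shows "(\<forall>n::nat. n \<ge> 1 \<longrightarrow> norm (a n) \<le> 2 * (A - qRe (f 0)))
    \<and> (\<forall>q r. norm q \<le> r \<and> r < 1 \<longrightarrow>
          norm (f q - f 0) \<le> 2 * r / (1 - r) * (A - qRe (f 0)))
    \<and> (\<forall>q r. norm q \<le> r \<and> r < 1 \<longrightarrow>
          qRe (f q) \<le> 2 * r / (1 + r) * A + (1 - r) / (1 + r) * qRe (f 0))
    \<and> (\<forall>q r (n::nat). norm q \<le> r \<and> r < 1 \<and> n \<ge> 1 \<longrightarrow>
          norm (slice_deriv a n q) \<le> 2 * fact n / (1 - r) ^ (n + 1) * (A - qRe (f 0)))"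
proof -
  have ball_iff: "q \<in> qball \<longleftrightarrow> norm q < 1" for q by (simp add: qball_def)
  have Aq: "qRe (f q) \<le> A" if "q \<in> qball" for q
    unfolding A_def by (rule cSUP_upper[OF that bdd])
  have sums_f: "(\<lambda>n. qmult (qpow q n) (a n)) sums f q" if "norm q < 1" for q
  proof -
    have q: "q \<in> qball" using that by (simp add: ball_iff)
    show ?thesis using summable_sums[OF conv[rule_format, OF q]] f_eq q by (simp add: qseries_def)
  qed
  have absum: "summable (\<lambda>n. norm (a n) * r^n)" if r: "0 \<le> r" "r < 1" for r
  proof -
    define r' where "r' = (1 + r) / 2"
    have r': "0 < r'" "r' < 1" "r < r'" using r by (auto simp: r'_def)
    define q :: quat where "q = (r', 0, 0, 0)"
    have nq: "norm q = r'" using r' by (simp add: q_def qnorm)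
    have "summable (\<lambda>n. qmult (qpow q n) (a n))" using sums_f[of q] nq r' by (auto simp: sums_iff)
    then have "(\<lambda>n. qmult (qpow q n) (a n)) \<longlonglongrightarrow> 0" by (rule summable_LIMSEQ_zero)
    then have "Bseq (\<lambda>n. qmult (qpow q n) (a n))" by (intro convergent_imp_Bseq convergentI)
    then obtain M where M: "\<And>n. norm (qmult (qpow q n) (a n)) \<le> M" by (auto simp: Bseq_def)
    have b: "norm (a n) * r'^n \<le> M" for n using M[of n] by (simp add: qmult_norm qpow_norm nq mult.commute)
    have "summable (\<lambda>n. M * (r/r')^n)" using r r' by (intro summable_mult summable_geometric) auto
    then show ?thesis
    proof (rule summable_comparison_test[rotated])
      show "\<exists>N. \<forall>n\<ge>N. norm (norm (a n) * r^n) \<le> M * (r/r')^n"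
      proof (intro exI allI impI)
        fix n
        have "norm (a n) * r^n = (norm (a n) * r'^n) * (r/r')^n"
          using r' by (simp add: power_divide)
        also have "\<dots> \<le> M * (r/r')^n" using b r r' by (intro mult_right_mono) auto
        finally show "norm (norm (a n) * r^n) \<le> M * (r/r')^n" using r by simp
      qed
    qed
  qed
  have f0: "f 0 = a 0"
  proof -
    have "(\<lambda>n. qmult (qpow 0 n) (a n)) = (\<lambda>n. if n = 0 then a n else 0)"
    proof
      fix n show "qmult (qpow 0 n) (a n) = (if n = 0 then a n else 0)"
        by (cases n) (simp_all del: qpow.simps(2) add: qpow_zero)
    qed
    then have "(\<lambda>n. qmult (qpow 0 n) (a n)) sums a 0" using sums_single[of 0 a] by simp
    then show ?thesis using sums_f[of 0] sums_unique2 by fastforce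
  qed
  define B where "B = A - qRe (f 0)"
  have smc: "summable (\<lambda>m. norm (ccoef i j k (a m)) * r^m)"
    if u: "i^2+j^2+k^2 = 1" and r: "0 \<le> r" "r < 1" for i j k r
  proof (rule summable_comparison_test[OF _ absum[OF r]])
    show "\<exists>N. \<forall>n\<ge>N. norm (norm (ccoef i j k (a n)) * r^n) \<le> norm (a n) * r^n"
    proof (intro exI allI impI)
      fix n :: nat
      have "norm (ccoef i j k (a n)) * r^n \<le> norm (a n) * r^n"
        using ccoef_norm[OF u, of "a n"] r by (intro mult_right_mono) auto
      then show "norm (norm (ccoef i j k (a n)) * r^n) \<le> norm (a n) * r^n" using r by simp
    qed
  qed
  have fre: "qRe (f (qphi i j k z)) = Re (\<Sum>m. ccoef i j k (a m) * z^m)"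
    if u: "i^2+j^2+k^2 = 1" and z: "norm z < 1" for i j k z
  proof -
    have nq: "norm (qphi i j k z) < 1" using z qphi_norm[OF u] by simp
    have s1: "(\<lambda>m. fst (qmult (qpow (qphi i j k z) m) (a m))) sums fst (f (qphi i j k z))"
      by (rule bounded_linear.sums[OF bounded_linear_fst sums_f[OF nq]])
    have e: "fst (qmult (qpow (qphi i j k z) m) (a m)) = Re (ccoef i j k (a m) * z^m)" for m
      using qRe_qphi[of i j k "z^m" "a m"] unfolding qphi_pow[OF u] qRe_def .
    have "summable (\<lambda>m. ccoef i j k (a m) * z^m)"
      by (rule summable_norm_cancel) (use smc[OF u, of "norm z"] z in \<open>simp add: norm_mult norm_power\<close>)
    then have s2: "(\<lambda>m. Re (ccoef i j k (a m) * z^m)) sums Re (\<Sum>m. ccoef i j k (a m) * z^m)"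
      by (intro sums_Re summable_sums)
    show ?thesis using s1 s2 unfolding e qRe_def by (rule sums_unique2)
  qed
  have lec: "Re (\<Sum>m. ccoef i j k (a m) * z^m) \<le> A"
    if u: "i^2+j^2+k^2 = 1" and z: "norm z < 1" for i j k z
  proof -
    have "qphi i j k z \<in> qball" using z qphi_norm[OF u] by (simp add: ball_iff)
    then show ?thesis using Aq fre[OF u z] by metis
  qed
  have c0: "Re (ccoef i j k (a 0)) = qRe (f 0)" for i j k by (simp add: ccoef_def qRe_def f0)
  have claim1: "norm (a n) \<le> 2 * B" if n: "n \<ge> 1" for n
  proof -
    obtain i j k where u: "i^2+j^2+k^2 = 1" and nc: "norm (ccoef i j k (a n)) = norm (a n)"
      using choose_slice[of "a n"] by blast
    have "norm (ccoef i j k (a n)) \<le> 2*(A - Re (ccoef i j k (a 0)))"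
      by (rule coef_bound[where c="\<lambda>m. ccoef i j k (a m)"]) (use smc[OF u] lec[OF u] n in auto)
    then show ?thesis using nc c0 by (simp add: B_def)
  qed
  have B0: "0 \<le> B" using claim1[of 1] norm_ge_zero[of "a 1"] by linarith
  have claim3: "qRe (f q) \<le> 2 * r / (1 + r) * A + (1 - r) / (1 + r) * qRe (f 0)"
    if qr: "norm q \<le> r" "r < 1" for q r
  proof -
    obtain i j k where u: "i^2+j^2+k^2 = 1" and qq: "qphi i j k (Complex (fst q) (sqrt ((fst (snd q))^2 + (fst (snd (snd q)))^2 + (snd (snd (snd q)))^2))) = q"
      using choose_slice[of q] by blast
    define z where "z = Complex (fst q) (sqrt ((fst (snd q))^2 + (fst (snd (snd q)))^2 + (snd (snd (snd q)))^2))"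
    have qz: "qphi i j k z = q" using qq by (simp add: z_def)
    have nz: "norm z \<le> r" using qphi_norm[OF u, of z] qz qr by simp
    have "Re (\<Sum>m. ccoef i j k (a m) * z^m) \<le> 2*r/(1+r)*A + (1-r)/(1+r)*Re (ccoef i j k (a 0))"
      by (rule harnack[where c="\<lambda>m. ccoef i j k (a m)"]) (use smc[OF u] lec[OF u] nz qr in auto)
    moreover have "qRe (f q) = Re (\<Sum>m. ccoef i j k (a m) * z^m)"
      using fre[OF u, of z] nz qr qz by simp
    ultimately show ?thesis using c0 by simp
  qed
  have claim2: "norm (f q - f 0) \<le> 2 * r / (1 - r) * B"
    if qr: "norm q \<le> r" "r < 1" for q r
  proof -
    have r0: "0 \<le> r" using qr norm_ge_zero order_trans by blast
    have nq: "norm q < 1" using qr by linarith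
    define s where "s n = qmult (qpow q n) (a n)" for n
    have ss: "s sums f q" using sums_f[OF nq] by (simp add: s_def[abs_def])
    have s0: "s 0 = a 0" by (simp add: s_def)
    have ns: "norm (s n) = norm (a n) * norm q ^ n" for n by (simp add: s_def qmult_norm qpow_norm mult.commute)
    have feq: "f q - f 0 = (\<Sum>n. s (Suc n))"
      using suminf_split_head[OF sums_summable[OF ss]] sums_unique[OF ss] s0 f0 by simp
    have snorm: "summable (\<lambda>n. norm (s (Suc n)))"
      using absum[of "norm q"] nq unfolding ns by (subst summable_Suc_iff) auto
    have geo: "(\<lambda>n. 2*B * r^(Suc n)) sums (2 * r / (1 - r) * B)"
    proof -
      have "(\<lambda>n. r^n) sums (1/(1-r))" using r0 qr by (intro geometric_sums) auto
      then have "(\<lambda>n. (2*B*r) * r^n) sums ((2*B*r) * (1/(1-r)))" by (rule sums_mult)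
      then show ?thesis by (simp add: mult_ac)
    qed
    have bnd: "norm (s (Suc n)) \<le> 2*B * r^(Suc n)" for n
    proof -
      have "norm (s (Suc n)) = norm (a (Suc n)) * norm q ^ Suc n" by (rule ns)
      also have "\<dots> \<le> (2*B) * r ^ Suc n"
        using claim1[of "Suc n"] B0 qr by (intro mult_mono power_mono) auto
      finally show ?thesis .
    qed
    have "norm (\<Sum>n. s (Suc n)) \<le> (\<Sum>n. norm (s (Suc n)))" by (rule summable_norm[OF snorm])
    also have "\<dots> \<le> (\<Sum>n. 2*B*r^(Suc n))" by (rule suminf_le[OF bnd snorm sums_summable[OF geo]])
    also have "\<dots> = 2 * r / (1 - r) * B" by (rule sums_unique[OF geo, symmetric])
    finally show ?thesis unfolding feq .
  qed
  have claim4: "norm (slice_deriv a n q) \<le> 2 * fact n / (1 - r) ^ (n + 1) * B"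
    if qr: "norm q \<le> r" "r < 1" and n: "n \<ge> 1" for q r n
  proof -
    have r0: "0 \<le> r" using qr norm_ge_zero order_trans by blast
    define t where "t k = (fact (k + n) / fact k :: real) *\<^sub>R qmult (qpow q k) (a (k + n))" for k
    define g where "g k = fact (k+n) / fact k * r^k * (2*B)" for k
    have gs: "g sums (fact n / (1-r)^(n+1) * (2*B))"
      unfolding g_def[abs_def] by (rule sums_mult2[OF binom_series[OF r0 qr(2)]])
    have tb: "norm (t k) \<le> g k" for k
    proof -
      have "norm (t k) = fact (k+n) / fact k * (norm q ^ k * norm (a (k+n)))"
        by (simp add: t_def qmult_norm qpow_norm)
      also have "\<dots> \<le> fact (k+n) / fact k * (r^k * (2*B))"
        using claim1[of "k+n"] n qr r0 by (intro mult_left_mono mult_mono power_mono) auto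
      finally show ?thesis by (simp add: g_def mult_ac)
    qed
    have tn: "summable (\<lambda>k. norm (t k))"
      by (rule summable_comparison_test[OF _ sums_summable[OF gs]]) (use tb in auto)
    have "norm (slice_deriv a n q) = norm (suminf t)" by (simp add: slice_deriv_def t_def[abs_def])
    also have "\<dots> \<le> (\<Sum>k. norm (t k))" by (rule summable_norm[OF tn])
    also have "\<dots> \<le> suminf g" by (rule suminf_le[OF tb tn sums_summable[OF gs]])
    also have "\<dots> = fact n / (1-r)^(n+1) * (2*B)" using gs by (rule sums_unique[symmetric])
    finally show ?thesis by (simp add: mult_ac)
  qed
  show ?thesis using claim1 claim2 claim3 claim4 unfolding B_def by blast
qed

end
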